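(* Let $X$ be a $T_1$ space with countable extent and $|X|<\mathfrak{b}$. Then $X$ is absolutely strongly star-Menger if and only if $X$ is selectively $(a)$.
   Context: All spaces are regular. $St(A,\mathcal{U})=\bigcup\{U\in\mathcal{U}:U\cap A\neq\emptyset\}$. $\mathfrak{b}$ is the bounding number. $X$ has countable extent if every closed discrete subset is countable. $X$ is absolutely strongly star-Menger if for every sequence $(\mathcal{U}_n:n\in\omega)$ of open covers and every dense $D\subseteq X$ there are finite $F_n\subseteq D$ with $\{St(F_n,\mathcal{U}_n):n\in\omega\}$ covering $X$. $X$ is selectively $(a)$ if for every sequence $(\mathcal{U}_n)$ of open covers and every dense $D\subseteq X$ there are $C_n\subseteq D$, closed and discrete in $X$, with $\{St(C_n,\mathcal{U}_n):n\in\omega\}$ covering $X$. *)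

theory Defs
  imports "HOL-Analysis.Analysis"
begin

definition star_of :: "'a set \<Rightarrow> 'a set set \<Rightarrow> 'a set" where
  "star_of A \<U> = \<Union>{U \<in> \<U>. U \<inter> A \<noteq> {}}"

definition open_cover :: "'a topology \<Rightarrow> 'a set set \<Rightarrow> bool" where
  "open_cover X \<U> \<longleftrightarrow> (\<forall>U\<in>\<U>. openin X U) \<and> topspace X \<subseteq> \<Union>\<U>"

definition dense_in :: "'a topology \<Rightarrow> 'a set \<Rightarrow> bool" where
  "dense_in X D \<longleftrightarrow> D \<subseteq> topspace X \<and> X closure_of D = topspace X"

definition closed_discrete :: "'a topology \<Rightarrow> 'a set \<Rightarrow> bool" where
  "closed_discrete X C \<longleftrightarrow> closedin X C \<and> subtopology X C = discrete_topology C"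

definition countable_extent :: "'a topology \<Rightarrow> bool" where
  "countable_extent X \<longleftrightarrow> (\<forall>C. closed_discrete X C \<longrightarrow> countable C)"

definition abs_strongly_star_Menger :: "'a topology \<Rightarrow> bool" where
  "abs_strongly_star_Menger X \<longleftrightarrow>
    (\<forall>\<U> :: nat \<Rightarrow> 'a set set. \<forall>D. (\<forall>n. open_cover X (\<U> n)) \<and> dense_in X D \<longrightarrow>
       (\<exists>F :: nat \<Rightarrow> 'a set. (\<forall>n. finite (F n) \<and> F n \<subseteq> D) \<and>
          topspace X \<subseteq> (\<Union>n. star_of (F n) (\<U> n))))"

definition selectively_a :: "'a topology \<Rightarrow> bool" where
  "selectively_a X \<longleftrightarrow>
    (\<forall>\<U> :: nat \<Rightarrow> 'a set set. \<forall>D. (\<forall>n. open_cover X (\<U> n)) \<and> dense_in X D \<longrightarrow>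
       (\<exists>C :: nat \<Rightarrow> 'a set. (\<forall>n. C n \<subseteq> D \<and> closed_discrete X (C n)) \<and>
          topspace X \<subseteq> (\<Union>n. star_of (C n) (\<U> n))))"

definition eventually_le :: "(nat \<Rightarrow> nat) \<Rightarrow> (nat \<Rightarrow> nat) \<Rightarrow> bool" where
  "eventually_le f g \<longleftrightarrow> finite {n. g n < f n}"

definition unbounded_family :: "(nat \<Rightarrow> nat) set \<Rightarrow> bool" where
  "unbounded_family F \<longleftrightarrow> \<not> (\<exists>g. \<forall>f\<in>F. eventually_le f g)"

text \<open>|A| < b: the cardinality of A is strictly below that of every unbounded family.\<close>
definition card_less_bounding :: "'a set \<Rightarrow> bool" where
  "card_less_bounding A \<longleftrightarrow>
    (\<forall>F. unbounded_family F \<longrightarrow> (card_of A, card_of F) \<in> ordLess)"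

end

theory Submission
  imports Defs
begin

lemma star_of_mono: "A \<subseteq> B \<Longrightarrow> star_of A \<U> \<subseteq> star_of B \<U>"
  unfolding star_of_def by blast

lemma finite_closed_discrete:
  assumes "t1_space X" "finite F" "F \<subseteq> topspace X"
  shows "closed_discrete X F"
proof -
  have "closedin X F" using assms t1_space_closedin_finite by blast
  moreover have "subtopology X F = discrete_topology F"
    by (rule finite_t1_space_imp_discrete_topology)
       (use assms t1_space_subtopology in auto)
  ultimately show ?thesis unfolding closed_discrete_def by blast
qed

lemma dir1:
  assumes "t1_space X" "abs_strongly_star_Menger X"
  shows "selectively_a X"
  unfolding selectively_a_def
proof (intro allI impI)
  fix U :: "nat \<Rightarrow> 'a set set" and D
  assume h: "(\<forall>n. open_cover X (U n)) \<and> dense_in X D"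
  then obtain F where F: "\<forall>n. finite (F n) \<and> F n \<subseteq> D"
    "topspace X \<subseteq> (\<Union>n. star_of (F n) (U n))"
  proof -
    have "\<exists>F :: nat \<Rightarrow> 'a set. (\<forall>n. finite (F n) \<and> F n \<subseteq> D) \<and>
          topspace X \<subseteq> (\<Union>n. star_of (F n) (U n))"
      by (rule assms(2)[unfolded abs_strongly_star_Menger_def, rule_format, OF h])
    then show ?thesis using that by blast
  qed
  have "D \<subseteq> topspace X" using h unfolding dense_in_def by blast
  then have "\<forall>n. F n \<subseteq> D \<and> closed_discrete X (F n)"
  proof (intro allI conjI)
    fix n
    show "F n \<subseteq> D" using F(1) by blast
    then show "closed_discrete X (F n)"
      using F(1) assms(1) \<open>D \<subseteq> topspace X\<close> by (intro finite_closed_discrete) auto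
  qed
  then show "\<exists>C. (\<forall>n. C n \<subseteq> D \<and> closed_discrete X (C n)) \<and>
          topspace X \<subseteq> (\<Union>n. star_of (C n) (U n))" using F(2) by (intro exI[of _ F] conjI)
qed

lemma dir2:
  assumes ce: "countable_extent X" and cb: "card_less_bounding (topspace X)"
    and sa: "selectively_a X"
  shows "abs_strongly_star_Menger X"
  unfolding abs_strongly_star_Menger_def
proof (intro allI impI)
  fix U :: "nat \<Rightarrow> 'a set set" and D
  assume h: "(\<forall>n. open_cover X (U n)) \<and> dense_in X D"
  have sa': "\<And>U D. (\<forall>n. open_cover X (U n)) \<Longrightarrow> dense_in X D \<Longrightarrow>
       (\<exists>C :: nat \<Rightarrow> 'a set. (\<forall>n. C n \<subseteq> D \<and> closed_discrete X (C n)) \<and>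
          topspace X \<subseteq> (\<Union>n. star_of (C n) (U n)))"
    using sa[unfolded selectively_a_def, rule_format] by blast
  have hk: "\<forall>k. \<exists>Ck. (\<forall>j. Ck j \<subseteq> D \<and> closed_discrete X (Ck j)) \<and>
          topspace X \<subseteq> (\<Union>j. star_of (Ck j) (U (prod_encode (k,j))))"
  proof
    fix k
    show "\<exists>Ck. (\<forall>j. Ck j \<subseteq> D \<and> closed_discrete X (Ck j)) \<and>
          topspace X \<subseteq> (\<Union>j. star_of (Ck j) (U (prod_encode (k,j))))"
    proof -
      have "\<forall>n. open_cover X (U (prod_encode (k,n)))" using h by blast
      moreover have "dense_in X D" using h by blast
      ultimately show ?thesis by (rule sa')
    qed
  qed
  obtain CC where CC: "\<And>k. (\<forall>j. CC k j \<subseteq> D \<and> closed_discrete X (CC k j)) \<and>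
          topspace X \<subseteq> (\<Union>j. star_of (CC k j) (U (prod_encode (k,j))))"
    using choice[OF hk] by blast
  define C where "C n = CC (fst (prod_decode n)) (snd (prod_decode n))" for n
  have CD: "C n \<subseteq> D" for n using CC unfolding C_def by blast
  have Cc: "countable (C n)" for n
  proof -
    have "closed_discrete X (C n)" using CC unfolding C_def by blast
    then show ?thesis using ce unfolding countable_extent_def by blast
  qed
  have inf: "\<exists>n\<ge>N. x \<in> star_of (C n) (U n)" if hx: "x \<in> topspace X" for x N
  proof -
    obtain j where "x \<in> star_of (CC N j) (U (prod_encode (N,j)))" using CC[of N] hx by blast
    moreover have "C (prod_encode (N,j)) = CC N j" unfolding C_def by simp
    ultimately have "x \<in> star_of (C (prod_encode (N,j))) (U (prod_encode (N,j)))" by simp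
    then show ?thesis using le_prod_encode_1[of N j] by blast
  qed
  define e where "e n = from_nat_into (C n)" for n
  define f where "f x n = (if \<exists>m. x \<in> star_of {e n m} (U n)
      then LEAST m. x \<in> star_of {e n m} (U n) else 0)" for x n
  have "\<not> unbounded_family (f ` topspace X)"
  proof
    assume "unbounded_family (f ` topspace X)"
    then have "(card_of (topspace X), card_of (f ` topspace X)) \<in> ordLess"
      using cb unfolding card_less_bounding_def by blast
    moreover have "(card_of (f ` topspace X), card_of (topspace X)) \<in> ordLeq"
      by (rule card_of_image)
    ultimately show False by (rule notE[OF not_ordLess_ordLeq])
  qed
  then obtain g where g0: "\<forall>h\<in>f ` topspace X. eventually_le h g"
    unfolding unbounded_family_def by blast
  have g: "finite {n. g n < f x n}" if "x \<in> topspace X" for x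
    using g0 that unfolding eventually_le_def by blast
  define F where "F n = (if C n = {} then {} else e n ` {..g n})" for n
  have "\<forall>n. finite (F n) \<and> F n \<subseteq> D"
  proof
    fix n
    show "finite (F n) \<and> F n \<subseteq> D"
    proof (cases "C n = {}")
      case False
      then have "range (e n) = C n" unfolding e_def using Cc by simp
      then show ?thesis using CD[of n] False unfolding F_def by auto
    qed (simp add: F_def)
  qed
  moreover have "topspace X \<subseteq> (\<Union>n. star_of (F n) (U n))"
  proof
    fix x assume x: "x \<in> topspace X"
    obtain N where N: "\<forall>n\<in>{n. g n < f x n}. n < N"
      using g[OF x] finite_nat_set_iff_bounded by blast
    obtain n where n: "n \<ge> N" "x \<in> star_of (C n) (U n)" using inf[OF x] by blast
    have "n \<notin> {n. g n < f x n}" using N n(1) by auto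
    then have le: "f x n \<le> g n" by simp
    have ne: "C n \<noteq> {}" using n(2) unfolding star_of_def by blast
    then have r: "range (e n) = C n" unfolding e_def using Cc by simp
    have ex: "\<exists>m. x \<in> star_of {e n m} (U n)"
    proof -
      obtain V c where "V \<in> U n" "c \<in> V" "c \<in> C n" "x \<in> V"
        using n(2) unfolding star_of_def by blast
      moreover obtain m where "c = e n m" using r \<open>c \<in> C n\<close> by blast
      ultimately show ?thesis unfolding star_of_def by blast
    qed
    have "x \<in> star_of {e n (f x n)} (U n)"
      unfolding f_def using ex LeastI_ex[of "\<lambda>m. x \<in> star_of {e n m} (U n)"] by simp
    moreover have "e n (f x n) \<in> e n ` {..g n}" using le by (intro imageI) simp
    then have "{e n (f x n)} \<subseteq> F n" using ne unfolding F_def by simp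
    ultimately have "x \<in> star_of (F n) (U n)" using star_of_mono by blast
    then show "x \<in> (\<Union>n. star_of (F n) (U n))" by (rule UN_I[rotated]) simp
  qed
  ultimately show "\<exists>F. (\<forall>n. finite (F n) \<and> F n \<subseteq> D) \<and>
          topspace X \<subseteq> (\<Union>n. star_of (F n) (U n))"
    by (intro exI[of _ F] conjI)
qed

theorem mainTheorem18:
  fixes X :: "'a topology"
  assumes "regular_space X"
    and "t1_space X"
    and "countable_extent X"
    and "card_less_bounding (topspace X)"
  shows "abs_strongly_star_Menger X \<longleftrightarrow> selectively_a X"
  using dir1[OF assms(2)] dir2[OF assms(3,4)] by blast

end
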